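(* Let $A\in\mathbb{R}^{m\times n}$, $b\in\mathcal{R}(A)$, and let $f:\mathbb{R}^n\to\mathbb{R}$ be $\alpha$-strongly convex. Let $\hat x$ be the unique solution of $\min_{x\in\mathbb{R}^n} f(x)$ subject to $Ax=b$, and assume that the subdifferential mapping $\partial f$ is calm at $\hat x$ and that the collection $\{\partial f(\hat x),\mathcal{R}(A^T)\}$ is linearly regular. Let $I_1,\dots,I_r$ be a (not necessarily disjoint) covering of $\{1,\dots,m\}$, let $A_i$ be the submatrix of rows of $A$ indexed by $I_i$ and $b_i$ the subvector of $b$ indexed by $I_i$, and assign each index $i\in\{1,\dots,r\}$ arbitrarily either to $I_C$ or to $I_Q$. Run the algorithm described in the context with $x_0^*\in\mathcal{R}(A^T)$, $x_0=\nabla f^*(x_0^* )$ and probabilities $p_i>0$. Then the iterates converge in expectation to $\hat x$ at a linear rate: there are constants $q\in(0,1)$ and $c>0$ such that for all $k$ \[ \mathbb{E}\left[D_f^{x_{k+1}^*}(x_{k+1},\hat x)\right] \le q\cdot \mathbb{E}\left[D_f^{x_k^*}(x_k,\hat x)\right] \quad\text{and}\quad \mathbb{E}\left[\|x_k-\hat x\|_2\right]\le c\cdot q^{k/2}. \]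
   Context: $f$ is $\alpha$-strongly convex ($\alpha>0$) if $f(y)\ge f(x)+\langle x^*,y-x\rangle+\frac{\alpha}{2}\|y-x\|_2^2$ for all $x,y$, $x^*\in\partial f(x)$; its conjugate $f^*(x^* )=\sup_x\langle x^*,x\rangle-f(x)$ is then differentiable with Lipschitz gradient. Bregman distance: $D_f^{x^*}(x,y)=f(y)-f(x)-\langle x^*,y-x\rangle$. $\mathcal{R}(\cdot)$ is the range. A set-valued map $S:\mathbb{R}^n\rightrightarrows\mathbb{R}^n$ is calm at $\hat x$ if $S(\hat x)\neq\emptyset$ and there are $\epsilon,L>0$ with $S(x)\subset S(\hat x)+L\|x-\hat x\|_2 B_1$ whenever $\|x-\hat x\|_2\le\epsilon$, where $B_1$ is the closed Euclidean unit ball. Two closed convex sets $D_1,D_2$ with nonempty intersection are linearly regular if there is $\gamma>0$ with $\operatorname{dist}(x,D_1\cap D_2)^2\le\gamma(\operatorname{dist}(x,D_1)^2+\operatorname{dist}(x,D_2)^2)$ for all $x\in\mathbb{R}^n$ (Euclidean distances). Algorithm: for $k=0,1,\dots$ choose $i_k\in\{1,\dots,r\}$ independently with $P(i_k=i)=p_i$ ($\sum p_i=1$); write $i=i_k$. If $i\in I_C$: let $\hat w$ be a minimizer of $w\mapsto f^*(x_k^*-A_i^Tw)+\langle w,b_i\rangle$ and set $x_{k+1}^*=x_k^*-A_i^T\hat w$, $x_{k+1}=\nabla f^*(x_{k+1}^* )$ (this $x_{k+1}$ is the Bregman projection of $x_k$ onto $\{x:A_ix=b_i\}$, i.e. the minimizer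 of $D_f^{x_k^*}(x_k,\cdot)$ over that set). If $i\in I_Q$ (with $Q_i=\{b_i\}$): set $w_k=A_ix_k-b_i$, $\beta_k=\langle A_i^Tw_k,x_k\rangle-\|w_k\|_2^2$, let $t_k$ minimize $t\mapsto f^*(x_k^*-tA_i^Tw_k)+t\beta_k$ over $t\in\mathbb{R}$, and set $x_{k+1}^*=x_k^*-t_kA_i^Tw_k$, $x_{k+1}=\nabla f^*(x_{k+1}^* )$ (the Bregman projection of $x_k$ onto the half-space $\{x:\langle A_i^Tw_k,x\rangle\le\beta_k\}$); if $w_k=0$ then $x_{k+1}=x_k$, $x_{k+1}^*=x_k^*$. Expectations are over the random indices. *)

theory Defs
  imports "HOL-Analysis.Analysis"
begin

definition subdiff :: "(real^'n \<Rightarrow> real) \<Rightarrow> real^'n \<Rightarrow> (real^'n) set" where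
  "subdiff f x = {s. \<forall>y. f y \<ge> f x + s \<bullet> (y - x)}"

definition strongly_convex :: "real \<Rightarrow> (real^'n \<Rightarrow> real) \<Rightarrow> bool" where
  "strongly_convex \<alpha> f \<longleftrightarrow> \<alpha> > 0 \<and> convex_on UNIV f \<and>
     (\<forall>x y s. s \<in> subdiff f x \<longrightarrow> f y \<ge> f x + s \<bullet> (y - x) + \<alpha> / 2 * (norm (y - x))\<^sup>2)"

definition conj :: "(real^'n \<Rightarrow> real) \<Rightarrow> real^'n \<Rightarrow> real" where
  "conj f s = (SUP x. s \<bullet> x - f x)"

definition grad_conj :: "(real^'n \<Rightarrow> real) \<Rightarrow> real^'n \<Rightarrow> real^'n" where
  "grad_conj f s = (THE D. GDERIV (conj f) s :> D)"

definition bregman :: "(real^'n \<Rightarrow> real) \<Rightarrow> real^'n \<Rightarrow> real^'n \<Rightarrow> real^'n \<Rightarrow> real" where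
  "bregman f s x y = f y - f x - s \<bullet> (y - x)"

definition calm :: "(real^'n \<Rightarrow> (real^'n) set) \<Rightarrow> real^'n \<Rightarrow> bool" where
  "calm S xh \<longleftrightarrow> S xh \<noteq> {} \<and>
     (\<exists>\<epsilon>>0. \<exists>L>0. \<forall>x. norm (x - xh) \<le> \<epsilon> \<longrightarrow>
        S x \<subseteq> {u + v | u v. u \<in> S xh \<and> v \<in> cball 0 (L * norm (x - xh))})"

definition lin_regular :: "(real^'n) set \<Rightarrow> (real^'n) set \<Rightarrow> bool" where
  "lin_regular D1 D2 \<longleftrightarrow> closed D1 \<and> convex D1 \<and> closed D2 \<and> convex D2 \<and> D1 \<inter> D2 \<noteq> {} \<and>
     (\<exists>\<gamma>>0. \<forall>x. (infdist x (D1 \<inter> D2))\<^sup>2 \<le> \<gamma> * ((infdist x D1)\<^sup>2 + (infdist x D2)\<^sup>2))"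

(* vector in R^m supported on the row index set I: represents a vector in R^{|I|} *)
definition supported_on :: "'m set \<Rightarrow> real^'m \<Rightarrow> bool" where
  "supported_on I w \<longleftrightarrow> (\<forall>j. j \<notin> I \<longrightarrow> w $ j = 0)"

(* Vectors in R^{|I_i|} are represented as vectors of R^m
   supported on I i, so A_i^T w = transpose A *v w, <w,b_i> = w \<bullet> b. *)
definition alg_step ::
  "(real^'n \<Rightarrow> real) \<Rightarrow> real^'n^'m \<Rightarrow> real^'m \<Rightarrow> (nat \<Rightarrow> 'm set) \<Rightarrow> nat set
     \<Rightarrow> nat \<Rightarrow> real^'n \<Rightarrow> real^'n \<Rightarrow> bool" where
  "alg_step f A b I IC i xs xs' \<longleftrightarrow>
    (if i \<in> IC then
       (\<exists>w. supported_on (I i) w \<and>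
          (\<forall>v. supported_on (I i) v \<longrightarrow>
              conj f (xs - transpose A *v w) + w \<bullet> b \<le> conj f (xs - transpose A *v v) + v \<bullet> b) \<and>
          xs' = xs - transpose A *v w)
     else
       (let x = grad_conj f xs;
            w = (\<chi> j. if j \<in> I i then (A *v x - b) $ j else 0);
            \<beta> = (transpose A *v w) \<bullet> x - (norm w)\<^sup>2
        in if w = 0 then xs' = xs
           else (\<exists>t. (\<forall>s. conj f (xs - t *\<^sub>R (transpose A *v w)) + t * \<beta>
                          \<le> conj f (xs - s *\<^sub>R (transpose A *v w)) + s * \<beta>) \<and>
                     xs' = xs - t *\<^sub>R (transpose A *v w))))"

definition idx_lists :: "nat \<Rightarrow> nat \<Rightarrow> nat list set" where
  "idx_lists r k = {\<omega>. length \<omega> = k \<and> set \<omega> \<subseteq> {1..r}}"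

definition expect :: "(nat \<Rightarrow> real) \<Rightarrow> nat \<Rightarrow> nat \<Rightarrow> (nat list \<Rightarrow> real) \<Rightarrow> real" where
  "expect p r k g = (\<Sum>\<omega>\<in>idx_lists r k. (\<Prod>j<k. p (\<omega> ! j)) * g \<omega>)"

end

theory Submission
  imports Defs
begin

lemma key_ineq:
  assumes sc: "strongly_convex \<alpha> f" and sx: "s \<in> subdiff f x"
  shows "s' \<bullet> y - f y \<le> s' \<bullet> x - f x + (norm (s' - s))\<^sup>2 / (2*\<alpha>)"
proof -
  have a: "\<alpha> > 0" using sc by (simp add: strongly_convex_def)
  have f: "f y \<ge> f x + s \<bullet> (y - x) + \<alpha> / 2 * (norm (y - x))\<^sup>2"
    using sc sx by (simp add: strongly_convex_def)
  have cs: "(s' - s) \<bullet> (y - x) \<le> norm (s' - s) * norm (y - x)"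
    by (simp add: norm_cauchy_schwarz)
  have am: "norm (s' - s) * norm (y - x) \<le> (norm (s' - s))\<^sup>2 / (2*\<alpha>) + \<alpha> / 2 * (norm (y - x))\<^sup>2"
  proof -
    define u where "u = norm (s' - s)"
    define v where "v = norm (y - x)"
    have "0 \<le> (u - \<alpha> * v)\<^sup>2 / (2*\<alpha>)" using a by simp
    also have "\<dots> = u\<^sup>2 / (2*\<alpha>) + \<alpha> / 2 * v\<^sup>2 - u * v"
      using a by (simp add: power2_eq_square field_simps)
    finally show ?thesis unfolding u_def v_def by simp
  qed
  have "s' \<bullet> y = s' \<bullet> x + s \<bullet> (y - x) + (s' - s) \<bullet> (y - x)"
    by (simp add: inner_diff_left inner_diff_right)
  then show ?thesis using f cs am by linarith
qed

lemma conj_bounds: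
  assumes sc: "strongly_convex \<alpha> f" and sx: "s \<in> subdiff f x"
  shows "conj f s' \<le> s' \<bullet> x - f x + (norm (s' - s))\<^sup>2 / (2*\<alpha>)"
    and "conj f s' \<ge> s' \<bullet> x - f x"
proof -
  have b: "\<And>y. s' \<bullet> y - f y \<le> s' \<bullet> x - f x + (norm (s' - s))\<^sup>2 / (2*\<alpha>)"
    using key_ineq[OF sc sx] .
  show "conj f s' \<le> s' \<bullet> x - f x + (norm (s' - s))\<^sup>2 / (2*\<alpha>)"
    unfolding conj_def by (rule cSUP_least) (auto simp: b)
  have "bdd_above (range (\<lambda>y. s' \<bullet> y - f y))"
    using b by (intro bdd_aboveI2) auto
  then show "conj f s' \<ge> s' \<bullet> x - f x"
    unfolding conj_def using cSUP_upper[of x UNIV "\<lambda>y. s' \<bullet> y - f y"] by auto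
qed

lemma conj_at:
  assumes sc: "strongly_convex \<alpha> f" and sx: "s \<in> subdiff f x"
  shows "conj f s = s \<bullet> x - f x"
  using conj_bounds[OF sc sx, of s] by simp

lemma grad_conj_at:
  assumes sc: "strongly_convex \<alpha> f" and sx: "s \<in> subdiff f x"
  shows "grad_conj f s = x"
proof -
  have a: "\<alpha> > 0" using sc by (simp add: strongly_convex_def)
  have cs: "conj f s = s \<bullet> x - f x" by (rule conj_at[OF sc sx])
  have bnd: "\<bar>conj f y - conj f s - (y - s) \<bullet> x\<bar> \<le> (norm (y - s))\<^sup>2 / (2*\<alpha>)" for y
    using conj_bounds[OF sc sx, of y] cs a by (simp add: inner_diff_left abs_le_iff)
  have d: "GDERIV (conj f) s :> x"
    unfolding gderiv_def has_derivative_at_alt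
  proof (intro conjI allI impI)
    show "bounded_linear (\<lambda>h. h \<bullet> x)" by (rule bounded_linear_inner_left)
    fix e :: real assume e: "e > 0"
    show "\<exists>d>0. \<forall>y. norm (y - s) < d \<longrightarrow> norm (conj f y - conj f s - (y - s) \<bullet> x) \<le> e * norm (y - s)"
    proof (intro exI[of _ "2*\<alpha>*e"] conjI allI impI)
      show "0 < 2*\<alpha>*e" using a e by simp
      fix y assume y: "norm (y - s) < 2*\<alpha>*e"
      have "norm (y - s) * norm (y - s) \<le> (2*\<alpha>*e) * norm (y - s)"
        using y by (intro mult_right_mono) auto
      then have "(norm (y - s))\<^sup>2 / (2*\<alpha>) \<le> e * norm (y - s)"
        using a by (simp add: power2_eq_square divide_le_eq mult.commute mult.left_commute)
      then show "norm (conj f y - conj f s - (y - s) \<bullet> x) \<le> e * norm (y - s)"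
        using bnd[of y] by simp
    qed
  qed
  show ?thesis unfolding grad_conj_def
  proof (rule the_equality[where P="\<lambda>D. GDERIV (conj f) s :> D", OF d])
    fix D assume "GDERIV (conj f) s :> D"
    then have "(\<lambda>h. h \<bullet> D) = (\<lambda>h. h \<bullet> x)"
      using d unfolding gderiv_def by (rule has_derivative_unique)
    then have "(D - x) \<bullet> D = (D - x) \<bullet> x" by metis
    then have "(D - x) \<bullet> (D - x) = 0" by (simp add: inner_diff_right)
    then show "D = x" by simp
  qed
qed

lemma sub_exists:
  assumes sc: "strongly_convex \<alpha> f" and s0: "s0 \<in> subdiff f z"
  shows "\<exists>x. s \<in> subdiff f x"
proof -
  have a: "\<alpha> > 0" and cv: "convex_on UNIV f" using sc by (auto simp: strongly_convex_def)
  have cf: "continuous_on UNIV f" by (rule convex_on_continuous[OF open_UNIV cv])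
  define g where "g y = f y - s \<bullet> y" for y
  have cg: "continuous_on (cball z R) g" for R
    unfolding g_def by (intro continuous_intros continuous_on_subset[OF cf]) auto
  define R where "R = 2 * norm (s0 - s) / \<alpha> + 1"
  have R0: "R \<ge> 0" using a unfolding R_def by simp
  obtain x where xin: "x \<in> cball z R" and xmin: "\<forall>y\<in>cball z R. g x \<le> g y"
    using continuous_attains_inf[OF compact_cball _ cg, of R] R0 by (auto simp del: mem_cball)
  have gz: "g x \<le> g z" using xmin R0 by simp
  have far: "g z < g y" if "y \<notin> cball z R" for y
  proof -
    define d where "d = norm (y - z)"
    have dR: "d > R" using that unfolding d_def by (simp add: dist_norm norm_minus_commute)
    have f: "f y \<ge> f z + s0 \<bullet> (y - z) + \<alpha> / 2 * d\<^sup>2"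
      using sc s0 unfolding d_def by (simp add: strongly_convex_def)
    have "(s0 - s) \<bullet> (y - z) \<ge> - (norm (s0 - s) * d)"
      unfolding d_def using Cauchy_Schwarz_ineq2[of "s0 - s" "y - z"] by linarith
    then have "g y - g z \<ge> \<alpha> / 2 * d\<^sup>2 - norm (s0 - s) * d"
      using f unfolding g_def by (simp add: inner_diff_left inner_diff_right algebra_simps)
    moreover have "\<alpha> / 2 * d > norm (s0 - s)"
      using dR a unfolding R_def by (simp add: field_simps)
    then have "\<alpha> / 2 * d\<^sup>2 - norm (s0 - s) * d > 0"
      using dR R0 by (simp add: power2_eq_square algebra_simps)
    ultimately show ?thesis by linarith
  qed
  have "\<forall>y. g x \<le> g y" using xmin far gz by (meson less_le_not_le order_trans linorder_le_cases)
  then have "s \<in> subdiff f x"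
    unfolding subdiff_def g_def by (auto simp: inner_diff_right algebra_simps)
  then show ?thesis by blast
qed

lemma adj: "(transpose A *v y) \<bullet> v = y \<bullet> ((A::real^'n^'m) *v v)"
  using adjoint_clauses(2)[OF matrix_vector_mul_linear[of A], of y v]
  by (simp add: adjoint_matrix)

lemma range_sub: "subspace (range (\<lambda>y. transpose (A::real^'n^'m) *v y))"
  by (rule linear_subspace_image[OF matrix_vector_mul_linear subspace_UNIV])

lemma L1:
  fixes A :: "real^'n^'m"
  shows "\<exists>\<kappa>>0. \<forall>z\<in>range (\<lambda>y. transpose A *v y). \<forall>v. \<bar>z \<bullet> v\<bar> \<le> \<kappa> * norm z * norm (A *v v)"
proof -
  let ?S = "range (\<lambda>y. transpose A *v y)"
  have ss: "subspace ?S" by (rule range_sub)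
  have cl: "closed ?S" by (rule closed_subspace[OF ss])
  have inj: "\<forall>z\<in>?S. A *v z = 0 \<longrightarrow> z = 0"
  proof (intro ballI impI)
    fix z assume "z \<in> ?S" "A *v z = 0"
    then obtain y where y: "z = transpose A *v y" by auto
    have "z \<bullet> z = y \<bullet> (A *v z)" using adj[of A y z] y by simp
    then show "z = 0" using \<open>A *v z = 0\<close> by simp
  qed
  have bl: "bounded_linear (\<lambda>x. A *v x)" using matrix_vector_mul_linear linear_linear by blast
  obtain e where e: "e > 0" "\<forall>z\<in>?S. norm (A *v z) \<ge> e * norm z"
    using injective_imp_isometric[OF cl ss bl inj] by blast
  show ?thesis
  proof (intro exI[of _ "1/e"] conjI ballI allI)
    show "0 < 1/e" using e by simp
    fix z v assume z: "z \<in> ?S"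
    obtain u w where u: "u \<in> span ?S" and w: "\<And>t. t \<in> span ?S \<Longrightarrow> orthogonal w t" and vuw: "v = u + w"
      using orthogonal_subspace_decomp_exists[of ?S v] by metis
    have spS: "span ?S = ?S" using ss span_eq_iff by blast
    have uS: "u \<in> ?S" using u spS by blast
    have zw: "z \<bullet> w = 0" using w[of z] z span_base[of z ?S] by (simp add: orthogonal_def inner_commute)
    have Aw: "A *v w = 0"
    proof -
      have "transpose A *v (A *v w) \<in> span ?S" by (intro span_base) auto
      then have "w \<bullet> (transpose A *v (A *v w)) = 0" using w by (simp add: orthogonal_def)
      then have "(A *v w) \<bullet> (A *v w) = 0" using adj[of A "A *v w" w] by (simp add: inner_commute)
      then show ?thesis by simp
    qed
    have Av: "A *v v = A *v u" using Aw vuw by (simp add: matrix_vector_right_distrib)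
    have "\<bar>z \<bullet> v\<bar> = \<bar>z \<bullet> u\<bar>" using zw vuw by (simp add: inner_add_right)
    also have "\<dots> \<le> norm z * norm u" by (rule Cauchy_Schwarz_ineq2)
    also have "\<dots> \<le> norm z * (norm (A *v u) / e)"
      using e uS by (intro mult_left_mono) (auto simp: field_simps)
    finally show "\<bar>z \<bullet> v\<bar> \<le> 1 / e * norm z * norm (A *v v)" using Av by simp
  qed
qed

definition phi :: "(real^'n \<Rightarrow> real) \<Rightarrow> real^'n \<Rightarrow> real^'n \<Rightarrow> real" where
  "phi f xh s = conj f s - s \<bullet> xh + f xh"

lemma phi_shift:
  assumes sc: "strongly_convex \<alpha> f" and sx: "s \<in> subdiff f x"
  shows "phi f xh (s - h) \<le> phi f xh s - h \<bullet> (x - xh) + (norm h)\<^sup>2 / (2*\<alpha>)"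
  using conj_bounds(1)[OF sc sx, of "s - h"] conj_at[OF sc sx]
  unfolding phi_def by (simp add: inner_diff_left inner_diff_right)

lemma resid_inner:
  fixes v :: "real^'m"
  shows "(\<chi> j. if j \<in> J then v $ j else 0) \<bullet> v = (\<chi> j. if j \<in> J then v $ j else 0) \<bullet> (\<chi> j. if j \<in> J then v $ j else 0)"
  unfolding inner_vec_def by (intro sum.cong) auto

lemma step_decrease:
  fixes A :: "real^'n^'m"
  assumes sc: "strongly_convex \<alpha> f" and s0: "s0 \<in> subdiff f xh"
    and feas: "A *v xh = b"
    and K: "K > 0" "\<And>v. norm (transpose A *v v) \<le> K * norm v"
    and st: "alg_step f A b I IC i s s'"
  shows "phi f xh s' \<le> phi f xh s - \<alpha> / (2*K\<^sup>2) *
     (norm (\<chi> j. if j \<in> I i then (A *v grad_conj f s - b) $ j else 0))\<^sup>2"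
proof -
  have a: "\<alpha> > 0" using sc by (simp add: strongly_convex_def)
  obtain x where sx: "s \<in> subdiff f x" using sub_exists[OF sc s0] by blast
  have gx: "grad_conj f s = x" by (rule grad_conj_at[OF sc sx])
  define w where "w = (\<chi> j. if j \<in> I i then (A *v x - b) $ j else 0)"
  define \<tau> where "\<tau> = \<alpha> / K\<^sup>2"
  have wAx: "w \<bullet> (A *v x - b) = w \<bullet> w" unfolding w_def by (rule resid_inner)
  have hx: "(\<tau> *\<^sub>R (transpose A *v w)) \<bullet> (x - xh) = \<tau> * (norm w)\<^sup>2"
  proof -
    have "(transpose A *v w) \<bullet> (x - xh) = w \<bullet> (A *v (x - xh))" by (rule adj)
    also have "\<dots> = w \<bullet> (A *v x - b)" using feas by (simp add: matrix_vector_mult_diff_distrib)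
    finally show ?thesis using wAx by (simp add: power2_norm_eq_inner)
  qed
  have hn: "(norm (\<tau> *\<^sub>R (transpose A *v w)))\<^sup>2 \<le> \<tau>\<^sup>2 * K\<^sup>2 * (norm w)\<^sup>2"
  proof -
    have "norm (\<tau> *\<^sub>R (transpose A *v w)) \<le> \<bar>\<tau>\<bar> * (K * norm w)"
      using K(2)[of w] by (simp add: mult_left_mono)
    then have "(norm (\<tau> *\<^sub>R (transpose A *v w)))\<^sup>2 \<le> (\<bar>\<tau>\<bar> * (K * norm w))\<^sup>2"
      by (intro power_mono) auto
    then show ?thesis by (simp add: power_mult_distrib)
  qed
  have main: "phi f xh (s - \<tau> *\<^sub>R (transpose A *v w)) \<le> phi f xh s - \<alpha> / (2*K\<^sup>2) * (norm w)\<^sup>2"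
  proof -
    have "phi f xh (s - \<tau> *\<^sub>R (transpose A *v w)) \<le> phi f xh s - \<tau> * (norm w)\<^sup>2 + \<tau>\<^sup>2 * K\<^sup>2 * (norm w)\<^sup>2 / (2*\<alpha>)"
      using phi_shift[OF sc sx, of xh "\<tau> *\<^sub>R (transpose A *v w)"] hx hn a
      by (smt (verit) divide_right_mono)
    also have "\<tau> * (norm w)\<^sup>2 - \<tau>\<^sup>2 * K\<^sup>2 * (norm w)\<^sup>2 / (2*\<alpha>) = \<alpha> / (2*K\<^sup>2) * (norm w)\<^sup>2"
      unfolding \<tau>_def using a K by (simp add: power2_eq_square field_simps)
    then have "phi f xh s - \<tau> * (norm w)\<^sup>2 + \<tau>\<^sup>2 * K\<^sup>2 * (norm w)\<^sup>2 / (2*\<alpha>) = phi f xh s - \<alpha> / (2*K\<^sup>2) * (norm w)\<^sup>2"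
      by linarith
    finally show ?thesis .
  qed
  have phiA: "phi f xh (s - transpose A *v v) = conj f (s - transpose A *v v) + v \<bullet> b + (f xh - s \<bullet> xh)" for v
    unfolding phi_def using adj[of A v xh] feas by (simp add: inner_diff_left)
  have sc_t: "transpose A *v (\<tau> *\<^sub>R w) = \<tau> *\<^sub>R (transpose A *v w)"
    by (simp add: matrix_vector_mult_scaleR)
  have "phi f xh s' \<le> phi f xh (s - \<tau> *\<^sub>R (transpose A *v w))"
  proof (cases "i \<in> IC")
    case True
    then obtain w' where sup: "\<forall>v. supported_on (I i) v \<longrightarrow>
              conj f (s - transpose A *v w') + w' \<bullet> b \<le> conj f (s - transpose A *v v) + v \<bullet> b"
      and s': "s' = s - transpose A *v w'"
      using st unfolding alg_step_def by auto
    have "supported_on (I i) (\<tau> *\<^sub>R w)" unfolding supported_on_def w_def by simp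
    then have "conj f (s - transpose A *v w') + w' \<bullet> b \<le> conj f (s - transpose A *v (\<tau> *\<^sub>R w)) + (\<tau> *\<^sub>R w) \<bullet> b"
      using sup by blast
    then have "phi f xh s' \<le> phi f xh (s - transpose A *v (\<tau> *\<^sub>R w))"
      unfolding s' phiA by linarith
    then show ?thesis using sc_t by simp
  next
    case False
    let ?w = "\<chi> j. if j \<in> I i then (A *v x - b) $ j else 0"
    let ?\<beta> = "(transpose A *v ?w) \<bullet> x - (norm ?w)\<^sup>2"
    have st': "if ?w = 0 then s' = s
           else (\<exists>t. (\<forall>u. conj f (s - t *\<^sub>R (transpose A *v ?w)) + t * ?\<beta>
                          \<le> conj f (s - u *\<^sub>R (transpose A *v ?w)) + u * ?\<beta>) \<and>
                     s' = s - t *\<^sub>R (transpose A *v ?w))"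
      using st False unfolding alg_step_def Let_def gx by simp
    show ?thesis
    proof (cases "w = 0")
      case True
      then have "s' = s" using st' unfolding w_def by simp
      then show ?thesis using True by simp
    next
      case wn: False
      then obtain t where tmin: "\<forall>u. conj f (s - t *\<^sub>R (transpose A *v w)) + t * ?\<beta>
                          \<le> conj f (s - u *\<^sub>R (transpose A *v w)) + u * ?\<beta>"
          and s': "s' = s - t *\<^sub>R (transpose A *v w)"
        using st' unfolding w_def by auto
      have beta: "?\<beta> = w \<bullet> b"
      proof -
        have "(transpose A *v w) \<bullet> x = w \<bullet> (A *v x)" by (rule adj)
        also have "\<dots> = w \<bullet> (A *v x - b) + w \<bullet> b" by (simp add: inner_diff_right)
        finally show ?thesis using wAx unfolding w_def[symmetric] by (simp add: power2_norm_eq_inner)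
      qed
      have phiT: "phi f xh (s - u *\<^sub>R (transpose A *v w)) = conj f (s - u *\<^sub>R (transpose A *v w)) + u * (w \<bullet> b) + (f xh - s \<bullet> xh)" for u
        using phiA[of "u *\<^sub>R w"] by (simp add: matrix_vector_mult_scaleR)
      show ?thesis unfolding s' phiT using tmin[rule_format, of \<tau>] beta unfolding w_def[symmetric] by simp
    qed
  qed
  with main show ?thesis unfolding gx w_def by simp
qed

lemma subgrad_bounded:
  fixes f :: "real^'n \<Rightarrow> real"
  assumes cv: "convex_on UNIV f"
  shows "\<exists>M. \<forall>x s. norm (x - z) \<le> R \<longrightarrow> s \<in> subdiff f x \<longrightarrow> norm s \<le> M"
proof -
  have cf: "continuous_on UNIV f" by (rule convex_on_continuous[OF open_UNIV cv])
  have "compact (f ` cball z (R+1))"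
    by (intro compact_continuous_image continuous_on_subset[OF cf]) auto
  then have "bounded (f ` cball z (R+1))" by (rule compact_imp_bounded)
  then obtain Bf where Bf0: "\<forall>u\<in>f ` cball z (R+1). norm u \<le> Bf"
    unfolding bounded_iff by blast
  have Bf: "\<forall>y\<in>cball z (R+1). norm (f y) \<le> Bf" using Bf0 by blast
  show ?thesis
  proof (intro exI[of _ "2*Bf"] allI impI)
    fix x s assume xz: "norm (x - z) \<le> R" and sx: "s \<in> subdiff f x"
    show "norm s \<le> 2*Bf"
    proof (cases "s = 0")
      case True
      have "0 \<le> R" using xz norm_ge_zero[of "x - z"] by linarith
      then have "norm (z - z) \<le> R" by simp
      then have "norm (f z) \<le> Bf" using Bf by (auto simp: dist_norm)
      then show ?thesis using True by simp
    next
      case False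
      define y where "y = x + (1 / norm s) *\<^sub>R s"
      have "norm (y - z) \<le> norm (x - z) + norm ((1 / norm s) *\<^sub>R s)"
      proof -
        have "y - z = (x - z) + (1 / norm s) *\<^sub>R s" by (simp add: y_def algebra_simps)
        then show ?thesis by (metis norm_triangle_ineq)
      qed
      also have "norm ((1 / norm s) *\<^sub>R s) = 1" using False by simp
      finally have "norm (y - z) \<le> R + 1" using xz by simp
      then have fy: "\<bar>f y\<bar> \<le> Bf" using Bf by (auto simp: dist_norm norm_minus_commute)
      have xin: "norm (x - z) \<le> R + 1" using xz by simp
      then have fx: "\<bar>f x\<bar> \<le> Bf" using Bf by (auto simp: dist_norm norm_minus_commute)
      have "f y \<ge> f x + s \<bullet> (y - x)" using sx unfolding subdiff_def by blast
      moreover have "s \<bullet> (y - x) = norm s"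
        unfolding y_def using False by (simp add: power2_norm_eq_inner[symmetric] power2_eq_square)
      ultimately show ?thesis using fy fx by linarith
    qed
  qed
qed

lemma phi_bregman:
  assumes sc: "strongly_convex \<alpha> f" and sx: "s \<in> subdiff f x"
  shows "phi f xh s = f xh - f x - s \<bullet> (xh - x)"
  using conj_at[OF sc sx] unfolding phi_def by (simp add: inner_diff_right)

lemma phi_lower:
  assumes sc: "strongly_convex \<alpha> f" and sx: "s \<in> subdiff f x"
  shows "phi f xh s \<ge> \<alpha> / 2 * (norm (x - xh))\<^sup>2"
proof -
  have "f xh \<ge> f x + s \<bullet> (xh - x) + \<alpha> / 2 * (norm (xh - x))\<^sup>2"
    using sc sx unfolding strongly_convex_def by blast
  then show ?thesis using phi_bregman[OF sc sx, of xh] by (simp add: norm_minus_commute)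
qed

lemma error_bound:
  fixes A :: "real^'n^'m"
  assumes sc: "strongly_convex \<alpha> f"
    and feas: "A *v xh = b"
    and calm: "calm (subdiff f) xh"
    and linreg: "lin_regular (subdiff f xh) (range (\<lambda>y. transpose A *v y))"
  shows "\<exists>\<Gamma>>0. \<forall>s x. s \<in> range (\<lambda>y. transpose A *v y) \<longrightarrow> s \<in> subdiff f x \<longrightarrow>
            phi f xh s \<le> B \<longrightarrow> phi f xh s \<le> \<Gamma> * (norm (A *v x - b))\<^sup>2"
proof -
  let ?R = "range (\<lambda>y. transpose A *v y)"
  let ?S = "subdiff f xh \<inter> ?R"
  have a: "\<alpha> > 0" and cv: "convex_on UNIV f" using sc by (auto simp: strongly_convex_def)
  obtain \<gamma> where g: "\<gamma> > 0" and lr: "\<forall>x. (infdist x ?S)\<^sup>2 \<le> \<gamma> * ((infdist x (subdiff f xh))\<^sup>2 + (infdist x ?R)\<^sup>2)"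
    and clS: "closed ?S" and neS: "?S \<noteq> {}"
    using linreg unfolding lin_regular_def by blast
  obtain \<epsilon> L where e: "\<epsilon> > 0" and L: "L > 0" and cm: "\<forall>x. norm (x - xh) \<le> \<epsilon> \<longrightarrow>
        subdiff f x \<subseteq> {u + v | u v. u \<in> subdiff f xh \<and> v \<in> cball 0 (L * norm (x - xh))}"
    using calm unfolding calm_def by blast
  obtain \<kappa> where k: "\<kappa> > 0" and kap: "\<forall>z\<in>?R. \<forall>v. \<bar>z \<bullet> v\<bar> \<le> \<kappa> * norm z * norm (A *v v)"
    using L1[of A] by blast
  obtain s0 where s0: "s0 \<in> ?S" using neS by blast
  define Rr where "Rr = sqrt (2 * max B 0 / \<alpha>)"
  obtain M where M: "\<forall>x s. norm (x - xh) \<le> Rr \<longrightarrow> s \<in> subdiff f x \<longrightarrow> norm s \<le> M"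
    using subgrad_bounded[OF cv, of xh Rr] by blast
  define C where "C = max (sqrt \<gamma> * L) ((M + norm s0) / \<epsilon>)"
  have C0: "C \<ge> 0" unfolding C_def using g L by (intro order_trans[OF _ max.cobounded1]) simp
  have close: "\<exists>sh\<in>?S. norm (s - sh) \<le> C * norm (x - xh)"
    if sR: "s \<in> ?R" and sx: "s \<in> subdiff f x" and pB: "phi f xh s \<le> B" for s x
  proof (cases "norm (x - xh) \<le> \<epsilon>")
    case True
    define d where "d = norm (x - xh)"
    obtain u v where u: "u \<in> subdiff f xh" and v: "v \<in> cball 0 (L * d)" and suv: "s = u + v"
      using cm True sx unfolding d_def by blast
    have i1: "infdist s (subdiff f xh) \<le> L * d"
      using u v suv by (intro infdist_le2[of u]) (auto simp: dist_norm)
    have i2: "infdist s ?R = 0" using sR by simp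
    have "(infdist s ?S)\<^sup>2 \<le> \<gamma> * (L * d)\<^sup>2"
    proof -
      have "(infdist s (subdiff f xh))\<^sup>2 \<le> (L * d)\<^sup>2"
        using i1 infdist_nonneg by (intro power_mono) auto
      then have "\<gamma> * (infdist s (subdiff f xh))\<^sup>2 \<le> \<gamma> * (L * d)\<^sup>2"
        using g by (intro mult_left_mono) auto
      then show ?thesis using lr[rule_format, of s] i2 by simp
    qed
    then have "infdist s ?S \<le> sqrt (\<gamma> * (L * d)\<^sup>2)" by (simp add: real_le_rsqrt)
    also have "\<dots> = sqrt \<gamma> * L * d" using L g unfolding d_def by (simp add: real_sqrt_mult)
    finally have id: "infdist s ?S \<le> sqrt \<gamma> * L * d" .
    obtain sh where sh: "sh \<in> ?S" and shm: "\<And>y. y \<in> ?S \<Longrightarrow> dist s sh \<le> dist s y"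
      using distance_attains_inf[OF clS neS, of s] by blast
    have "dist s sh \<le> infdist s ?S"
      unfolding infdist_notempty[OF neS] by (rule cINF_greatest[OF neS]) (rule shm)
    then have "norm (s - sh) \<le> sqrt \<gamma> * L * d" using id by (simp add: dist_norm)
    also have "\<dots> \<le> C * d" unfolding C_def d_def by (intro mult_right_mono) auto
    finally show ?thesis using sh unfolding d_def by blast
  next
    case False
    have "phi f xh s \<ge> \<alpha> / 2 * (norm (x - xh))\<^sup>2" by (rule phi_lower[OF sc sx])
    then have "(norm (x - xh))\<^sup>2 \<le> 2 * max B 0 / \<alpha>" using pB a by (simp add: field_simps)
    then have "norm (x - xh) \<le> Rr" unfolding Rr_def by (simp add: real_le_rsqrt)
    then have sM: "norm s \<le> M" using M sx by blast
    have "norm (s - s0) \<le> M + norm s0" using sM norm_triangle_ineq4[of s s0] by linarith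
    also have "\<dots> \<le> (M + norm s0) / \<epsilon> * norm (x - xh)"
    proof -
      have "M + norm s0 \<ge> 0" using sM norm_ge_zero[of s] norm_ge_zero[of s0] by linarith
      then have "(M + norm s0) * \<epsilon> \<le> (M + norm s0) * norm (x - xh)"
        using False by (intro mult_left_mono) auto
      then show ?thesis using e by (simp add: field_simps)
    qed
    also have "\<dots> \<le> C * norm (x - xh)" unfolding C_def by (intro mult_right_mono) auto
    finally show ?thesis using s0 by blast
  qed
  define \<Gamma> where "\<Gamma> = 2 * \<kappa>\<^sup>2 * C\<^sup>2 / \<alpha> + 1"
  show ?thesis
  proof (intro exI[of _ \<Gamma>] conjI allI impI)
    have "2 * \<kappa>\<^sup>2 * C\<^sup>2 / \<alpha> \<ge> 0" using a by simp
    then show "\<Gamma> > 0" unfolding \<Gamma>_def by linarith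
    fix s x assume sR: "s \<in> ?R" and sx: "s \<in> subdiff f x" and pB: "phi f xh s \<le> B"
    define D where "D = phi f xh s"
    define d where "d = norm (x - xh)"
    define \<rho> where "\<rho> = norm (A *v x - b)"
    obtain sh where sh: "sh \<in> ?S" and shd: "norm (s - sh) \<le> C * d"
      using close[OF sR sx pB] unfolding d_def by blast
    have "\<alpha> / 2 * (norm (x - xh))\<^sup>2 \<ge> 0" using a by simp
    then have D0: "D \<ge> 0" unfolding D_def using phi_lower[OF sc sx, of xh] by linarith
    have Dd: "\<alpha> / 2 * d\<^sup>2 \<le> D" unfolding D_def d_def by (rule phi_lower[OF sc sx])
    have "f x \<ge> f xh + sh \<bullet> (x - xh)" using sh unfolding subdiff_def by blast
    then have "D \<le> (sh - s) \<bullet> (xh - x)"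
      unfolding D_def phi_bregman[OF sc sx] by (simp add: inner_diff_left inner_diff_right)
    also have "\<dots> \<le> \<kappa> * norm (sh - s) * norm (A *v (xh - x))"
    proof -
      have "sh - s \<in> ?R" using sh sR range_sub[of A] by (auto intro: subspace_diff)
      then have "\<bar>(sh - s) \<bullet> (xh - x)\<bar> \<le> \<kappa> * norm (sh - s) * norm (A *v (xh - x))"
        using kap by blast
      then show ?thesis by linarith
    qed
    also have "norm (A *v (xh - x)) = \<rho>"
      unfolding \<rho>_def using feas by (simp add: matrix_vector_mult_diff_distrib norm_minus_commute)
    also have "\<kappa> * norm (sh - s) * \<rho> \<le> \<kappa> * (C * d) * \<rho>"
      using k shd unfolding \<rho>_def by (intro mult_right_mono mult_left_mono) (auto simp: norm_minus_commute)
    finally have D1: "D \<le> \<kappa> * C * d * \<rho>" by (simp add: ac_simps)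
    have "D\<^sup>2 \<le> (\<kappa> * C * d * \<rho>)\<^sup>2" using D1 D0 by (intro power_mono) auto
    also have "\<dots> = \<kappa>\<^sup>2 * C\<^sup>2 * \<rho>\<^sup>2 * d\<^sup>2" by (simp add: power_mult_distrib)
    also have "\<dots> \<le> \<kappa>\<^sup>2 * C\<^sup>2 * \<rho>\<^sup>2 * (2 * D / \<alpha>)"
    proof (intro mult_left_mono)
      have "\<alpha> * d\<^sup>2 \<le> 2 * D" using Dd by simp
      then show "d\<^sup>2 \<le> 2 * D / \<alpha>" using a by (simp add: le_divide_eq mult.commute)
    qed simp
    also have "\<kappa>\<^sup>2 * C\<^sup>2 * \<rho>\<^sup>2 * (2 * D / \<alpha>) = (2 * \<kappa>\<^sup>2 * C\<^sup>2 / \<alpha> * \<rho>\<^sup>2) * D"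
      by simp
    finally have D2: "D * D \<le> (2 * \<kappa>\<^sup>2 * C\<^sup>2 / \<alpha> * \<rho>\<^sup>2) * D" by (simp add: power2_eq_square)
    have "D \<le> 2 * \<kappa>\<^sup>2 * C\<^sup>2 / \<alpha> * \<rho>\<^sup>2"
    proof (cases "D = 0")
      case True then show ?thesis using a by simp
    next
      case False
      then have "D > 0" using D0 by simp
      then show ?thesis using D2 mult_le_cancel_right_pos[of D D "2 * \<kappa>\<^sup>2 * C\<^sup>2 / \<alpha> * \<rho>\<^sup>2"] by blast
    qed
    also have "\<dots> \<le> \<Gamma> * \<rho>\<^sup>2" unfolding \<Gamma>_def by (simp add: distrib_right)
    finally show "phi f xh s \<le> \<Gamma> * (norm (A *v x - b))\<^sup>2" unfolding D_def \<rho>_def .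
  qed
qed

lemma idx_fin: "finite (idx_lists r k)"
proof -
  have "idx_lists r k = {xs. set xs \<subseteq> {1..r} \<and> length xs = k}" unfolding idx_lists_def by auto
  then show ?thesis using finite_lists_length_eq[of "{1..r}" k] by simp
qed

lemma idx_Suc: "idx_lists r (Suc k) = (\<lambda>(\<omega>, i). \<omega> @ [i]) ` (idx_lists r k \<times> {1..r})"
proof (intro set_eqI iffI)
  fix xs assume "xs \<in> idx_lists r (Suc k)"
  then have l: "length xs = Suc k" and st: "set xs \<subseteq> {1..r}" unfolding idx_lists_def by auto
  then have "xs \<noteq> []" by auto
  then obtain ys y where xs: "xs = ys @ [y]" by (metis rev_exhaust)
  then have "ys \<in> idx_lists r k" "y \<in> {1..r}" using l st unfolding idx_lists_def by auto
  then show "xs \<in> (\<lambda>(\<omega>, i). \<omega> @ [i]) ` (idx_lists r k \<times> {1..r})" using xs by force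
qed (auto simp: idx_lists_def)

lemma idx_inj: "inj_on (\<lambda>(\<omega>, i). \<omega> @ [i]) (idx_lists r k \<times> {1..r})"
  by (auto simp: inj_on_def)

lemma expect_Suc:
  "expect p r (Suc k) g = (\<Sum>\<omega>\<in>idx_lists r k. (\<Prod>j<k. p (\<omega> ! j)) * (\<Sum>i=1..r. p i * g (\<omega> @ [i])))"
proof -
  have "expect p r (Suc k) g = (\<Sum>x\<in>idx_lists r k \<times> {1..r}. (case x of (\<omega>, i) \<Rightarrow>
      (\<Prod>j<Suc k. p ((\<omega> @ [i]) ! j)) * g (\<omega> @ [i])))"
    unfolding expect_def idx_Suc by (subst sum.reindex[OF idx_inj]) (simp add: case_prod_beta)
  also have "\<dots> = (\<Sum>x\<in>idx_lists r k \<times> {1..r}. (case x of (\<omega>, i) \<Rightarrow>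
      (\<Prod>j<k. p (\<omega> ! j)) * (p i * g (\<omega> @ [i]))))"
  proof (intro sum.cong refl)
    fix x assume "x \<in> idx_lists r k \<times> {1..r}"
    then obtain \<omega> i where x: "x = (\<omega>, i)" and l: "length \<omega> = k" unfolding idx_lists_def by auto
    have "(\<Prod>j<Suc k. p ((\<omega> @ [i]) ! j)) = (\<Prod>j<k. p (\<omega> ! j)) * p i"
      using l by (simp add: prod.lessThan_Suc nth_append)
    then show "(case x of (\<omega>, i) \<Rightarrow> (\<Prod>j<Suc k. p ((\<omega> @ [i]) ! j)) * g (\<omega> @ [i])) =
      (case x of (\<omega>, i) \<Rightarrow> (\<Prod>j<k. p (\<omega> ! j)) * (p i * g (\<omega> @ [i])))" using x by simp
  qed
  also have "\<dots> = (\<Sum>\<omega>\<in>idx_lists r k. \<Sum>i=1..r. (\<Prod>j<k. p (\<omega> ! j)) * (p i * g (\<omega> @ [i])))"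
    by (subst sum.cartesian_product) simp
  also have "\<dots> = (\<Sum>\<omega>\<in>idx_lists r k. (\<Prod>j<k. p (\<omega> ! j)) * (\<Sum>i=1..r. p i * g (\<omega> @ [i])))"
    by (simp add: sum_distrib_left)
  finally show ?thesis .
qed

lemma P_nonneg:
  fixes p :: "nat \<Rightarrow> real"
  assumes "\<forall>i\<in>{1..r}. p i > 0" "\<omega> \<in> idx_lists r k"
  shows "(\<Prod>j<k. p (\<omega> ! j)) \<ge> 0"
proof (rule prod_nonneg)
  fix j assume "j \<in> {..<k}"
  then have "\<omega> ! j \<in> set \<omega>" using assms(2) unfolding idx_lists_def by auto
  then have "\<omega> ! j \<in> {1..r}" using assms(2) unfolding idx_lists_def by auto
  then show "p (\<omega> ! j) \<ge> 0" using assms(1) by fastforce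
qed

lemma expect_mono:
  assumes "\<forall>i\<in>{1..r}. p i > 0" "\<And>\<omega>. \<omega> \<in> idx_lists r k \<Longrightarrow> g \<omega> \<le> h \<omega>"
  shows "expect p r k g \<le> expect p r k h"
  unfolding expect_def using assms P_nonneg[OF assms(1)]
  by (intro sum_mono mult_left_mono) auto

lemma expect_one:
  assumes "(\<Sum>i=1..r. p i) = 1"
  shows "expect p r k (\<lambda>_. 1) = 1"
proof (induction k)
  case 0
  have "idx_lists r 0 = {[]}" unfolding idx_lists_def by auto
  then show ?case unfolding expect_def by simp
next
  case (Suc k)
  then show ?case unfolding expect_Suc using assms by (simp add: expect_def)
qed

lemma expect_lin:
  "expect p r k (\<lambda>\<omega>. a * g \<omega> + c) = a * expect p r k g + c * expect p r k (\<lambda>_. 1)"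
  unfolding expect_def by (simp add: sum.distrib sum_distrib_left algebra_simps)

lemma cover_sum:
  fixes v :: "real^'m" and r :: nat
  assumes cover: "(\<Union>i\<in>{1..r}. I i) = UNIV"
  shows "(norm v)\<^sup>2 \<le> (\<Sum>i=1..r. (norm (\<chi> j. if j \<in> I i then v $ j else 0))\<^sup>2)"
proof -
  have n: "(norm (\<chi> j. if j \<in> I i then v $ j else 0))\<^sup>2 = (\<Sum>j\<in>UNIV. if j \<in> I i then (v $ j)\<^sup>2 else 0)" for i
    unfolding power2_norm_eq_inner inner_vec_def by (intro sum.cong) (auto simp: power2_eq_square)
  have "(norm v)\<^sup>2 = (\<Sum>j\<in>UNIV. (v $ j)\<^sup>2)"
    unfolding power2_norm_eq_inner inner_vec_def by (simp add: power2_eq_square)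
  also have "\<dots> \<le> (\<Sum>j\<in>UNIV. \<Sum>i=1..r. if j \<in> I i then (v $ j)\<^sup>2 else 0)"
  proof (intro sum_mono)
    fix j :: 'm
    obtain i where i: "i \<in> {1..r}" "j \<in> I i" using cover by blast
    have "(if j \<in> I i then (v $ j)\<^sup>2 else 0) \<le> (\<Sum>i=1..r. if j \<in> I i then (v $ j)\<^sup>2 else 0)"
      by (rule member_le_sum[OF i(1)]) auto
    then show "(v $ j)\<^sup>2 \<le> (\<Sum>i=1..r. if j \<in> I i then (v $ j)\<^sup>2 else 0)" using i by simp
  qed
  also have "\<dots> = (\<Sum>i=1..r. (norm (\<chi> j. if j \<in> I i then v $ j else 0))\<^sup>2)"
    unfolding n by (rule sum.swap)
  finally show ?thesis .
qed

lemma step_range: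
  fixes A :: "real^'n^'m"
  assumes st: "alg_step f A b I IC i s s'" and sR: "s \<in> range (\<lambda>y. transpose A *v y)"
  shows "s' \<in> range (\<lambda>y. transpose A *v y)"
proof -
  let ?R = "range (\<lambda>y. transpose A *v y)"
  have ss: "subspace ?R" by (rule range_sub)
  have mem: "transpose A *v v \<in> ?R" for v by blast
  have "\<exists>v. s' = s - transpose A *v v"
  proof (cases "i \<in> IC")
    case True then show ?thesis using st unfolding alg_step_def by auto
  next
    case False
    let ?x = "grad_conj f s"
    let ?w = "\<chi> j. if j \<in> I i then (A *v ?x - b) $ j else 0"
    let ?\<beta> = "(transpose A *v ?w) \<bullet> ?x - (norm ?w)\<^sup>2"
    have st': "if ?w = 0 then s' = s
           else (\<exists>t. (\<forall>u. conj f (s - t *\<^sub>R (transpose A *v ?w)) + t * ?\<beta>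
                          \<le> conj f (s - u *\<^sub>R (transpose A *v ?w)) + u * ?\<beta>) \<and>
                     s' = s - t *\<^sub>R (transpose A *v ?w))"
      using st False unfolding alg_step_def Let_def by simp
    show ?thesis
    proof (cases "?w = 0")
      case True then have "s' = s - transpose A *v 0" using st' by simp
      then show ?thesis by blast
    next
      case False
      then obtain t where "s' = s - t *\<^sub>R (transpose A *v ?w)" using st' by auto
      then have "s' = s - transpose A *v (t *\<^sub>R ?w)" by (simp add: matrix_vector_mult_scaleR)
      then show ?thesis by blast
    qed
  qed
  then obtain v where "s' = s - transpose A *v v" by blast
  then show ?thesis using sR mem[of v] ss by (simp add: subspace_diff)
qed

theorem theorem4p5:
  fixes A :: "real^'n^'m" and b :: "real^'m" and f :: "real^'n \<Rightarrow> real" and \<alpha> :: real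
    and xh :: "real^'n" and r :: nat and I :: "nat \<Rightarrow> 'm set" and IC :: "nat set"
    and p :: "nat \<Rightarrow> real" and X :: "nat list \<Rightarrow> real^'n"
  assumes b_range: "b \<in> range (\<lambda>x. A *v x)"
    and sc: "strongly_convex \<alpha> f"
    and xh_feas: "A *v xh = b"
    and xh_min: "\<forall>x. A *v x = b \<longrightarrow> f xh \<le> f x"
    and calm: "calm (subdiff f) xh"
    and linreg: "lin_regular (subdiff f xh) (range (\<lambda>y. transpose A *v y))"
    and cover: "(\<Union>i\<in>{1..r}. I i) = UNIV"
    and IC_sub: "IC \<subseteq> {1..r}"
    and p_pos: "\<forall>i\<in>{1..r}. p i > 0"
    and p_sum: "(\<Sum>i=1..r. p i) = 1"
    and X0: "X [] \<in> range (\<lambda>y. transpose A *v y)"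
    and X_step: "\<forall>\<omega> i. set \<omega> \<subseteq> {1..r} \<longrightarrow> i \<in> {1..r} \<longrightarrow>
                    alg_step f A b I IC i (X \<omega>) (X (\<omega> @ [i]))"
  shows "\<exists>q c. 0 < q \<and> q < 1 \<and> c > 0 \<and>
           (\<forall>k. expect p r (Suc k) (\<lambda>\<omega>. bregman f (X \<omega>) (grad_conj f (X \<omega>)) xh)
                  \<le> q * expect p r k (\<lambda>\<omega>. bregman f (X \<omega>) (grad_conj f (X \<omega>)) xh)
              \<and> expect p r k (\<lambda>\<omega>. norm (grad_conj f (X \<omega>) - xh)) \<le> c * q powr (real k / 2))"
proof -
  let ?R = "range (\<lambda>y. transpose A *v y)"
  have a: "\<alpha> > 0" using sc by (simp add: strongly_convex_def)
  obtain s0 where s0: "s0 \<in> subdiff f xh" using linreg unfolding lin_regular_def by blast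
  have sub: "\<exists>x. s \<in> subdiff f x" for s using sub_exists[OF sc s0] .
  have sgc: "s \<in> subdiff f (grad_conj f s)" for s
  proof -
    obtain x where "s \<in> subdiff f x" using sub by blast
    then show ?thesis using grad_conj_at[OF sc] by metis
  qed
  have breg: "bregman f s (grad_conj f s) xh = phi f xh s" for s
    using phi_bregman[OF sc sgc[of s], of xh] unfolding bregman_def by simp
  obtain K where K: "K > 0" "\<And>v. norm (transpose A *v v) \<le> K * norm v"
    using linear_bounded_pos[OF matrix_vector_mul_linear[of "transpose A"]] by blast
  define c1 where "c1 = \<alpha> / (2*K\<^sup>2)"
  have c1: "c1 > 0" unfolding c1_def using a K by simp
  define W where "W s i = (\<chi> j. if j \<in> I i then (A *v grad_conj f s - b) $ j else 0)" for s i
  have dec: "phi f xh (X (\<omega> @ [i])) \<le> phi f xh (X \<omega>) - c1 * (norm (W (X \<omega>) i))\<^sup>2"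
    if "set \<omega> \<subseteq> {1..r}" "i \<in> {1..r}" for \<omega> i
    using step_decrease[OF sc s0 xh_feas K X_step[rule_format, OF that]] unfolding c1_def W_def .
  define B where "B = phi f xh (X [])"
  have inv: "X \<omega> \<in> ?R \<and> phi f xh (X \<omega>) \<le> B" if "set \<omega> \<subseteq> {1..r}" for \<omega>
    using that
  proof (induction \<omega> rule: rev_induct)
    case Nil then show ?case using X0 unfolding B_def by simp
  next
    case (snoc i \<omega>)
    then have o: "set \<omega> \<subseteq> {1..r}" and i: "i \<in> {1..r}" by auto
    have "X (\<omega> @ [i]) \<in> ?R" using step_range[OF X_step[rule_format, OF o i]] snoc o by blast
    moreover have "c1 * (norm (W (X \<omega>) i))\<^sup>2 \<ge> 0" using c1 by simp
    then have "phi f xh (X (\<omega> @ [i])) \<le> phi f xh (X \<omega>)" using dec[OF o i] by linarith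
    ultimately show ?case using snoc o by auto
  qed
  have "\<alpha> / 2 * (norm (grad_conj f (X []) - xh))\<^sup>2 \<ge> 0" using a by simp
  then have B0: "B \<ge> 0" unfolding B_def using phi_lower[OF sc sgc[of "X []"], of xh] by linarith
  obtain \<Gamma> where G: "\<Gamma> > 0" and eb: "\<forall>s x. s \<in> ?R \<longrightarrow> s \<in> subdiff f x \<longrightarrow>
            phi f xh s \<le> B \<longrightarrow> phi f xh s \<le> \<Gamma> * (norm (A *v x - b))\<^sup>2"
    using error_bound[OF sc xh_feas calm linreg, of B] by blast
  have rpos: "{1..r} \<noteq> {}"
  proof
    assume "{1..r} = {}"
    then show False using cover by auto
  qed
  define pm where "pm = Min (p ` {1..r})"
  have pm: "pm > 0" unfolding pm_def using p_pos rpos by (subst Min_gr_iff) auto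
  have pmle: "pm \<le> p i" if "i \<in> {1..r}" for i unfolding pm_def using that by simp
  define G' where "G' = \<Gamma> + c1 * pm"
  define q where "q = 1 - c1 * pm / G'"
  have "c1 * pm > 0" using c1 pm by simp
  then have G'pos: "G' > 0" unfolding G'_def using G by linarith
  have "c1 * pm < G'" unfolding G'_def using G by simp
  then have "c1 * pm / G' < 1" using G'pos by simp
  then have q0: "q > 0" unfolding q_def by linarith
  have q1: "q < 1" unfolding q_def using G'pos c1 pm by simp
  define E where "E k = expect p r k (\<lambda>\<omega>. phi f xh (X \<omega>))" for k
  have one_step: "(\<Sum>i=1..r. p i * phi f xh (X (\<omega> @ [i]))) \<le> q * phi f xh (X \<omega>)"
    if o: "set \<omega> \<subseteq> {1..r}" for \<omega>
  proof -
    let ?s = "X \<omega>"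
    let ?x = "grad_conj f ?s"
    let ?\<rho> = "(norm (A *v ?x - b))\<^sup>2"
    have h1: "(\<Sum>i=1..r. p i * phi f xh (X (\<omega> @ [i]))) \<le> (\<Sum>i=1..r. p i * (phi f xh ?s - c1 * (norm (W ?s i))\<^sup>2))"
      using dec[OF o] p_pos by (intro sum_mono mult_left_mono) (auto simp: less_imp_le)
    have "(\<Sum>i=1..r. p i * (phi f xh ?s - c1 * (norm (W ?s i))\<^sup>2)) = (\<Sum>i=1..r. p i * phi f xh ?s - c1 * (p i * (norm (W ?s i))\<^sup>2))"
      by (intro sum.cong refl) (simp add: right_diff_distrib)
    also have "\<dots> = (\<Sum>i=1..r. p i * phi f xh ?s) - (\<Sum>i=1..r. c1 * (p i * (norm (W ?s i))\<^sup>2))"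
      by (rule sum_subtractf)
    also have "\<dots> = phi f xh ?s - c1 * (\<Sum>i=1..r. p i * (norm (W ?s i))\<^sup>2)"
      using p_sum by (simp add: sum_distrib_left[symmetric] sum_distrib_right[symmetric])
    finally have h2: "(\<Sum>i=1..r. p i * (phi f xh ?s - c1 * (norm (W ?s i))\<^sup>2)) = phi f xh ?s - c1 * (\<Sum>i=1..r. p i * (norm (W ?s i))\<^sup>2)" .
    have h3: "(\<Sum>i=1..r. p i * (norm (W ?s i))\<^sup>2) \<ge> pm * ?\<rho>"
    proof -
      have "pm * ?\<rho> \<le> pm * (\<Sum>i=1..r. (norm (W ?s i))\<^sup>2)"
        using cover_sum[OF cover, of "A *v ?x - b"] pm unfolding W_def by (intro mult_left_mono) auto
      also have "\<dots> = (\<Sum>i=1..r. pm * (norm (W ?s i))\<^sup>2)" by (simp add: sum_distrib_left)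
      also have "\<dots> \<le> (\<Sum>i=1..r. p i * (norm (W ?s i))\<^sup>2)"
        using pmle by (intro sum_mono mult_right_mono) auto
      finally show ?thesis .
    qed
    then have h4: "c1 * (pm * ?\<rho>) \<le> c1 * (\<Sum>i=1..r. p i * (norm (W ?s i))\<^sup>2)"
      using c1 by (simp add: mult_left_mono)
    have h5: "phi f xh ?s \<le> G' * ?\<rho>"
    proof -
      have "phi f xh ?s \<le> \<Gamma> * ?\<rho>" using eb inv[OF o] sgc[of ?s] by blast
      also have "\<dots> \<le> G' * ?\<rho>" unfolding G'_def using c1 pm by (intro mult_right_mono) auto
      finally show ?thesis .
    qed
    then have "c1 * pm / G' * phi f xh ?s \<le> c1 * pm / G' * (G' * ?\<rho>)"
      using G'pos c1 pm by (intro mult_left_mono) auto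
    also have "c1 * pm / G' * (G' * ?\<rho>) = c1 * (pm * ?\<rho>)" using G'pos by simp
    finally have h6: "c1 * pm / G' * phi f xh ?s \<le> c1 * (pm * ?\<rho>)" .
    have h7: "q * phi f xh ?s = phi f xh ?s - c1 * pm / G' * phi f xh ?s"
      unfolding q_def by (simp add: left_diff_distrib)
    show ?thesis using h1 h2 h4 h6 h7 by linarith
  qed
  have Estep: "E (Suc k) \<le> q * E k" for k
  proof -
    have "E (Suc k) = (\<Sum>\<omega>\<in>idx_lists r k. (\<Prod>j<k. p (\<omega> ! j)) * (\<Sum>i=1..r. p i * phi f xh (X (\<omega> @ [i]))))"
      unfolding E_def by (rule expect_Suc)
    also have "\<dots> \<le> (\<Sum>\<omega>\<in>idx_lists r k. (\<Prod>j<k. p (\<omega> ! j)) * (q * phi f xh (X \<omega>)))"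
      using one_step P_nonneg[OF p_pos] by (intro sum_mono mult_left_mono) (auto simp: idx_lists_def)
    also have "\<dots> = q * E k" unfolding E_def expect_def by (simp add: sum_distrib_left mult.left_commute)
    finally show ?thesis .
  qed
  have Ebound: "E k \<le> q ^ k * B" for k
  proof (induction k)
    case 0
    have "idx_lists r 0 = {[]}" unfolding idx_lists_def by auto
    then show ?case unfolding E_def expect_def B_def by simp
  next
    case (Suc k)
    have "E (Suc k) \<le> q * E k" by (rule Estep)
    also have "\<dots> \<le> q * (q ^ k * B)" using Suc q0 by (intro mult_left_mono) auto
    finally show ?case by simp
  qed
  define c where "c = B / \<alpha> + 1 / 2"
  have cpos: "c > 0" unfolding c_def using B0 a by (simp add: add_nonneg_pos)
  have part1: "expect p r (Suc k) (\<lambda>\<omega>. bregman f (X \<omega>) (grad_conj f (X \<omega>)) xh)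
                  \<le> q * expect p r k (\<lambda>\<omega>. bregman f (X \<omega>) (grad_conj f (X \<omega>)) xh)" for k
      using Estep[of k] unfolding breg E_def .
  have part2: "expect p r k (\<lambda>\<omega>. norm (grad_conj f (X \<omega>) - xh)) \<le> c * q powr (real k / 2)" for k
  proof -
    define t where "t = q powr (real k / 2)"
    have t0: "t > 0" unfolding t_def using q0 by simp
    have tt: "t * t = q ^ k"
      unfolding t_def using q0 by (simp add: powr_add[symmetric] powr_realpow)
    have pt: "norm (grad_conj f (X \<omega>) - xh) \<le> 1 / (\<alpha> * t) * phi f xh (X \<omega>) + t / 2" for \<omega>
    proof -
      let ?u = "norm (grad_conj f (X \<omega>) - xh)"
      have l: "\<alpha> / 2 * ?u\<^sup>2 \<le> phi f xh (X \<omega>)" by (rule phi_lower[OF sc sgc])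
      have "?u \<le> (?u\<^sup>2 / t + t) / 2"
      proof -
        have "0 \<le> (?u - t)\<^sup>2" by simp
        then have "?u * (2 * t) \<le> ?u\<^sup>2 + t\<^sup>2" by (simp add: power2_diff)
        then have "?u \<le> (?u\<^sup>2 + t\<^sup>2) / (2 * t)" using t0 by (simp add: le_divide_eq)
        also have "(?u\<^sup>2 + t\<^sup>2) / (2 * t) = (?u\<^sup>2 / t + t) / 2" using t0
          by (simp add: add_divide_distrib power2_eq_square)
        finally show ?thesis .
      qed
      moreover have "?u\<^sup>2 / t \<le> 2 / (\<alpha> * t) * phi f xh (X \<omega>)"
      proof -
        have e: "?u\<^sup>2 = 2 / \<alpha> * (\<alpha> / 2 * ?u\<^sup>2)" using a by simp
        have "?u\<^sup>2 \<le> 2 / \<alpha> * phi f xh (X \<omega>)" using l a by (subst e) (intro mult_left_mono, auto)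
        then have "?u\<^sup>2 / t \<le> (2 / \<alpha> * phi f xh (X \<omega>)) / t" using t0 by (intro divide_right_mono) auto
        then show ?thesis by simp
      qed
      ultimately have "?u \<le> (2 / (\<alpha> * t) * phi f xh (X \<omega>) + t) / 2"
        by (meson add_right_mono divide_right_mono order_trans zero_le_numeral)
      also have "(2 / (\<alpha> * t) * phi f xh (X \<omega>) + t) / 2 = 1 / (\<alpha> * t) * phi f xh (X \<omega>) + t / 2"
        by (simp add: add_divide_distrib)
      finally show ?thesis .
    qed
    have "expect p r k (\<lambda>\<omega>. norm (grad_conj f (X \<omega>) - xh)) \<le> expect p r k (\<lambda>\<omega>. 1 / (\<alpha> * t) * phi f xh (X \<omega>) + t / 2)"
      by (rule expect_mono[OF p_pos pt])
    also have "\<dots> = 1 / (\<alpha> * t) * E k + t / 2"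
      unfolding expect_lin E_def expect_one[OF p_sum] by simp
    also have "\<dots> \<le> 1 / (\<alpha> * t) * (q ^ k * B) + t / 2"
      using Ebound[of k] t0 a by (intro add_right_mono mult_left_mono) auto
    also have "1 / (\<alpha> * t) * (q ^ k * B) + t / 2 = c * t"
      unfolding c_def tt[symmetric] using t0 a by (simp add: distrib_right)
    finally show "expect p r k (\<lambda>\<omega>. norm (grad_conj f (X \<omega>) - xh)) \<le> c * q powr (real k / 2)"
      unfolding t_def .
  qed
  show ?thesis using q0 q1 cpos part1 part2 by blast
qed

end
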